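(* Let $T=S_1\otimes S_3\otimes S_0+S_2\otimes S_0\otimes S_1+S_3\otimes S_2\otimes S_1+S_1\otimes S_2\otimes S_2+S_2\otimes S_1\otimes S_3+S_3\otimes S_3\otimes S_3$ and $$U_8=S_0\otimes S_0\otimes S_0+S_1\otimes S_3\otimes S_0+S_2\otimes S_0\otimes S_1+S_3\otimes S_2\otimes S_1+S_0\otimes S_1\otimes S_2+S_1\otimes S_2\otimes S_2+S_2\otimes S_1\otimes S_3+S_3\otimes S_3\otimes S_3.$$ Then $\mathrm{sr}(T)=6$ and $\mathrm{sr}(U_8)\ge 6$.
   Context: $S_0=\begin{bmatrix}1&0\\0&0\end{bmatrix}$, $S_1=\begin{bmatrix}0&1\\0&0\end{bmatrix}$, $S_2=\begin{bmatrix}0&0\\1&0\end{bmatrix}$, $S_3=\begin{bmatrix}0&0\\0&1\end{bmatrix}$. For a matrix $U$ on $\mathbb{C}^2\otimes\mathbb{C}^2\otimes\mathbb{C}^2$ (systems $A,B,C$), its Schmidt rank $\mathrm{sr}(U)$ is the least integer $r$ such that $U=\sum_{j=1}^r A_j\otimes B_j\otimes C_j$ with $A_j,B_j,C_j$ complex $2\times 2$ matrices (i.e. the tensor rank of $U$). *)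

theory Defs
  imports "HOL-Analysis.Analysis"
begin

type_synonym mat2 = "complex^2^2"
type_synonym mat8 = "complex^(2 \<times> 2 \<times> 2)^(2 \<times> 2 \<times> 2)"

text \<open>Matrix units; rows/columns of a 2x2 matrix are indexed by 1, 2 :: 2.\<close>
definition S0 :: mat2 where "S0 = (\<chi> i j. if i = 1 \<and> j = 1 then 1 else 0)"
definition S1 :: mat2 where "S1 = (\<chi> i j. if i = 1 \<and> j = 2 then 1 else 0)"
definition S2 :: mat2 where "S2 = (\<chi> i j. if i = 2 \<and> j = 1 then 1 else 0)"
definition S3 :: mat2 where "S3 = (\<chi> i j. if i = 2 \<and> j = 2 then 1 else 0)"

text \<open>Kronecker product A (x) B (x) C acting on C^2 (x) C^2 (x) C^2 (systems A,B,C).\<close>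
definition tensor3 :: "mat2 \<Rightarrow> mat2 \<Rightarrow> mat2 \<Rightarrow> mat8" where
  "tensor3 A B C = (\<chi> r c. A$(fst r)$(fst c) * B$(fst (snd r))$(fst (snd c)) * C$(snd (snd r))$(snd (snd c)))"

text \<open>Schmidt rank = tensor rank.\<close>
definition schmidt_rank :: "mat8 \<Rightarrow> nat" where
  "schmidt_rank U = (LEAST r. \<exists>A B C :: nat \<Rightarrow> mat2.
      U = (\<Sum>j<r. tensor3 (A j) (B j) (C j)))"

definition T_op :: mat8 where
  "T_op = tensor3 S1 S3 S0 + tensor3 S2 S0 S1 + tensor3 S3 S2 S1
        + tensor3 S1 S2 S2 + tensor3 S2 S1 S3 + tensor3 S3 S3 S3"

definition U8 :: mat8 where
  "U8 = tensor3 S0 S0 S0 + tensor3 S1 S3 S0 + tensor3 S2 S0 S1 + tensor3 S3 S2 S1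
      + tensor3 S0 S1 S2 + tensor3 S1 S2 S2 + tensor3 S2 S1 S3 + tensor3 S3 S3 S3"

end

theory Submission
  imports Defs
begin

definition ks :: "nat \<Rightarrow> nat \<Rightarrow> nat \<Rightarrow> complex" where
  "ks p x x' = (if p=0 \<and> x=0 \<and> x'=1 then 1 else if p=0 \<and> x=1 \<and> x'=0 then -1
     else if p=1 \<and> x=0 \<and> x'=2 then 1 else if p=1 \<and> x=2 \<and> x'=0 then -1
     else if p=2 \<and> x=1 \<and> x'=2 then 1 else if p=2 \<and> x=2 \<and> x'=1 then -1 else 0)"

lemma sum3: "(\<Sum>x<(3::nat). f x) = f 0 + f 1 + (f 2 :: 'a::comm_monoid_add)"
  by (simp add: eval_nat_numeral add_ac)

definition Wd :: "(nat \<Rightarrow> complex) \<Rightarrow> nat \<Rightarrow> nat \<Rightarrow> complex" where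
  "Wd al p x' = (\<Sum>x<3. ks p x x' * al x)"

lemma Wd_eq: "Wd al p x' = (if p=0 then (if x'=1 then al 0 else if x'=0 then - al 1 else 0)
   else if p=1 then (if x'=2 then al 0 else if x'=0 then - al 2 else 0)
   else if p=2 then (if x'=2 then al 1 else if x'=1 then - al 2 else 0) else 0)"
  by (simp add: Wd_def ks_def sum3)

lemma wedge2: "\<exists>s1 s2 :: nat \<Rightarrow> complex. \<forall>x'. \<exists>a b. \<forall>p. Wd al p x' = a * s1 p + b * s2 p"
proof (cases "al 0 \<noteq> 0")
  case True
  define s1 where "s1 p = (if p=0 then 1 else if p=2 then - al 2 / al 0 else 0)" for p :: nat
  define s2 where "s2 p = (if p=1 then 1 else if p=2 then al 1 / al 0 else 0)" for p :: nat
  have "Wd al p x' = Wd al 0 x' * s1 p + Wd al 1 x' * s2 p" for p x'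
    using True by (cases "p = 0"; cases "p = 1"; cases "p = 2"; cases "x' = 0"; cases "x' = 1"; cases "x' = 2") (simp_all add: Wd_eq s1_def s2_def field_simps)
  then show ?thesis by blast
next
  case F: False
  show ?thesis
  proof (cases "al 1 \<noteq> 0")
    case True
    define s1 where "s1 p = (if p=0 then 1 else if p=1 then al 2 / al 1 else 0)" for p :: nat
    define s2 where "s2 p = (if p=2 then 1 else 0 :: complex)" for p :: nat
    have "Wd al p x' = Wd al 0 x' * s1 p + Wd al 2 x' * s2 p" for p x'
      using True F by (cases "p = 0"; cases "p = 1"; cases "p = 2"; cases "x' = 0"; cases "x' = 1"; cases "x' = 2") (simp_all add: Wd_eq s1_def s2_def field_simps)
    then show ?thesis by blast
  next
    case False
    define s1 where "s1 p = (if p=1 then 1 else 0 :: complex)" for p :: nat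
    define s2 where "s2 p = (if p=2 then 1 else 0 :: complex)" for p :: nat
    have "Wd al p x' = Wd al 1 x' * s1 p + Wd al 2 x' * s2 p" for p x'
      using False F by (cases "p = 0"; cases "p = 1"; cases "p = 2"; cases "x' = 0"; cases "x' = 1"; cases "x' = 2") (simp_all add: Wd_eq s1_def s2_def field_simps)
    then show ?thesis by blast
  qed
qed

definition kmat :: "(nat \<Rightarrow> 'y \<Rightarrow> 'z \<Rightarrow> complex) \<Rightarrow> ('n \<Rightarrow> nat) \<Rightarrow> ('n \<Rightarrow> 'z)
   \<Rightarrow> ('n \<Rightarrow> nat) \<Rightarrow> ('n \<Rightarrow> 'y) \<Rightarrow> complex^'n^'n" where
  "kmat t rp rz cx cy = (\<chi> r c. \<Sum>x<3. ks (rp r) x (cx c) * t x (cy c) (rz r))"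

lemma rank_one_span:
  fixes rp cx :: "'n::finite \<Rightarrow> nat" and rz :: "'n \<Rightarrow> 'z" and cy :: "'n \<Rightarrow> 'y"
  shows "\<exists>P Q. \<forall>u. kmat (\<lambda>x y z. al x * be y * ga z) rp rz cx cy *v u \<in> vec.span {P, Q}"
proof -
  obtain s1 s2 where S: "\<forall>x'. \<exists>a b. \<forall>p. Wd al p x' = a * s1 p + b * s2 p"
    using wedge2 by blast
  then obtain a b where AB: "\<And>x' p. Wd al p x' = a x' * s1 p + b x' * s2 p"
    by metis
  define P :: "complex^'n" where "P = (\<chi> r. ga (rz r) * s1 (rp r))"
  define Q :: "complex^'n" where "Q = (\<chi> r. ga (rz r) * s2 (rp r))"
  have "kmat (\<lambda>x y z. al x * be y * ga z) rp rz cx cy *v u \<in> vec.span {P, Q}" for u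
  proof -
    define A where "A = (\<Sum>c\<in>UNIV. a (cx c) * be (cy c) * u $ c)"
    define B where "B = (\<Sum>c\<in>UNIV. b (cx c) * be (cy c) * u $ c)"
    have e: "(\<Sum>x<3. ks p x x' * (al x * bb * g)) = Wd al p x' * bb * g" for p x' bb g
      by (simp add: Wd_def sum3 algebra_simps)
    have "(kmat (\<lambda>x y z. al x * be y * ga z) rp rz cx cy *v u) $ r = (A *s P + B *s Q) $ r" for r
    proof -
      have "(kmat (\<lambda>x y z. al x * be y * ga z) rp rz cx cy *v u) $ r =
         (\<Sum>c\<in>UNIV. (a (cx c) * s1 (rp r) + b (cx c) * s2 (rp r)) * be (cy c) * ga (rz r) * u $ c)"
        by (simp add: kmat_def matrix_vector_mult_def e AB)
      also have "\<dots> = ga (rz r) * s1 (rp r) * A + ga (rz r) * s2 (rp r) * B"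
        unfolding A_def B_def sum_distrib_left sum.distrib[symmetric]
        by (rule sum.cong) (simp_all add: algebra_simps)
      finally show ?thesis by (simp add: P_def Q_def mult_ac)
    qed
    then have "kmat (\<lambda>x y z. al x * be y * ga z) rp rz cx cy *v u = A *s P + B *s Q"
      by (simp add: vec_eq_iff)
    also have "\<dots> \<in> vec.span {P, Q}"
      by (intro vec.span_add vec.span_scale vec.span_base) auto
    finally show ?thesis .
  qed
  then show ?thesis by blast
qed

lemma kmat_sum:
  fixes rp cx :: "'n::finite \<Rightarrow> nat" and rz :: "'n \<Rightarrow> 'z" and cy :: "'n \<Rightarrow> 'y"
  assumes "\<forall>x<3. \<forall>y z. t x y z = (\<Sum>j\<in>J. al j x * be j y * ga j z)"
  shows "kmat t rp rz cx cy *v u = (\<Sum>j\<in>J. kmat (\<lambda>x y z. al j x * be j y * ga j z) rp rz cx cy *v u)"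
proof -
  have "t x y z = (\<Sum>j\<in>J. al j x * be j y * ga j z)" if "x \<in> {..<3}" for x y z
    using assms that by auto
  then have h: "(\<Sum>x<3. ks p x x' * t x y z) = (\<Sum>x<3. ks p x x' * (\<Sum>j\<in>J. al j x * be j y * ga j z))" for p x' y z
    by (intro sum.cong) auto
  show ?thesis
    by (simp add: vec_eq_iff kmat_def matrix_vector_mult_def sum_component h sum_distrib_left
        sum_distrib_right sum.swap[of _ J])
qed

lemma koszul_bound:
  fixes rp cx :: "'n::finite \<Rightarrow> nat" and rz :: "'n \<Rightarrow> 'z" and cy :: "'n \<Rightarrow> 'y"
  and t :: "nat \<Rightarrow> 'y \<Rightarrow> 'z \<Rightarrow> complex"
  and al :: "'j \<Rightarrow> nat \<Rightarrow> complex" and be :: "'j \<Rightarrow> 'y \<Rightarrow> complex" and ga :: "'j \<Rightarrow> 'z \<Rightarrow> complex"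
  assumes fin: "finite J"
  and dec: "\<forall>x<3. \<forall>y z. t x y z = (\<Sum>j\<in>J. al j x * be j y * ga j z)"
  and sur: "\<forall>v::complex^'n. \<exists>u. v = kmat t rp rz cx cy *v u"
  shows "CARD('n) \<le> 2 * card J"
proof -
  have "\<forall>j. \<exists>PQ. \<forall>u. kmat (\<lambda>x y z. al j x * be j y * ga j z) rp rz cx cy *v u \<in> vec.span {fst PQ, snd PQ}"
    using rank_one_span by fastforce
  then obtain f where f: "\<And>j u. kmat (\<lambda>x y z. al j x * be j y * ga j z) rp rz cx cy *v u \<in> vec.span {fst (f j), snd (f j)}"
    by metis
  define W where "W = (\<Union>j\<in>J. {fst (f j), snd (f j)})"
  have finW: "finite W" using fin by (simp add: W_def)
  have "UNIV \<subseteq> vec.span W"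
  proof
    fix v :: "complex^'n"
    obtain u where "v = kmat t rp rz cx cy *v u" using sur by blast
    also have "\<dots> = (\<Sum>j\<in>J. kmat (\<lambda>x y z. al j x * be j y * ga j z) rp rz cx cy *v u)"
      by (rule kmat_sum[OF dec])
    also have "\<dots> \<in> vec.span W"
    proof (rule vec.span_sum)
      fix j assume "j \<in> J"
      then have "{fst (f j), snd (f j)} \<subseteq> W" by (auto simp: W_def)
      then show "kmat (\<lambda>x y z. al j x * be j y * ga j z) rp rz cx cy *v u \<in> vec.span W"
        using f vec.span_mono by blast
    qed
    finally show "v \<in> vec.span W" .
  qed
  then have "vec.dim (UNIV :: (complex^'n) set) \<le> card W"
    using vec.dim_le_card finW by blast
  then have "CARD('n) \<le> card W" by (simp only: vec_dim_card)
  also have "card W \<le> (\<Sum>j\<in>J. card {fst (f j), snd (f j)})"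
    unfolding W_def by (rule card_UN_le[OF fin])
  also have "\<dots> \<le> (\<Sum>j\<in>J. 2)"
    by (intro sum_mono) (simp add: card_insert_le_m1 card_le_Suc_iff)
  finally show ?thesis by simp
qed

definition ri :: "nat \<Rightarrow> 2" where "ri k = (if k < 2 then 1 else 2)"
definition ci :: "nat \<Rightarrow> 2" where "ci k = (if k = 0 \<or> k = 2 then 1 else 2)"
definition ent :: "nat \<Rightarrow> mat2 \<Rightarrow> complex" where "ent k M = M $ ri k $ ci k"
lemma lt4: "k < 4 \<Longrightarrow> k = 0 \<or> k = 1 \<or> k = 2 \<or> k = (3::nat)" by auto

definition tT :: "nat \<Rightarrow> nat \<Rightarrow> nat \<Rightarrow> complex" where
  "tT a b c = T_op $ (ri a, ri b, ri c) $ (ci a, ci b, ci c)"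

definition tt2 :: "(nat \<Rightarrow> nat \<Rightarrow> nat \<Rightarrow> complex) \<Rightarrow> (nat \<Rightarrow> complex) \<Rightarrow> (nat \<Rightarrow> complex)
   \<Rightarrow> nat \<Rightarrow> nat \<Rightarrow> nat \<Rightarrow> complex" where
  "tt2 tt l m x y z = tt (y+1) (x+1) (z+1) - l (z+1) * tt (y+1) (x+1) 0
     - m (x+1) * (tt (y+1) 0 (z+1) - l (z+1) * tt (y+1) 0 0)"

lemma exhaust_7: fixes x :: 7 shows "x = 0 \<or> x = 1 \<or> x = 2 \<or> x = 3 \<or> x = 4 \<or> x = 5 \<or> x = 6"
proof (induct x)
  case (of_int z)
  then have "z = 0 \<or> z = 1 \<or> z = 2 \<or> z = 3 \<or> z = 4 \<or> z = 5 \<or> z = 6" by fastforce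
  then show ?case by auto
qed

lemma UNIV7l: "(UNIV::7 set) = set [0,1,2,3,4,5,6]" using exhaust_7 by auto
lemma d7: "distinct [0,1,2,3,4,5,6::7]" by simp
lemma sum_UNIV7: "(\<Sum>j\<in>UNIV. f j) = f 0 + (f 1 + (f 2 + (f 3 + (f 4 + (f 5 + (f (6::7) :: 'a::comm_monoid_add))))))"
  unfolding UNIV7l sum.distinct_set_conv_list[OF d7] by simp

definition rp7 :: "7 \<Rightarrow> nat" where "rp7 i = (if i = 0 \<or> i = 1 \<or> i = 2 then 0 else if i = 3 then 1 else 2)"
definition rz7 :: "7 \<Rightarrow> nat" where "rz7 i = (if i = 0 \<or> i = 4 then 0 else if i = 1 \<or> i = 5 then 1 else 2)"
definition cx7 :: "7 \<Rightarrow> nat" where "cx7 i = (if i = 0 \<or> i = 1 then 0 else if i = 2 \<or> i = 3 then 1 else 2)"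
definition cy7 :: "7 \<Rightarrow> nat" where "cy7 i = (if i = 0 \<or> i = 4 then 0 else if i = 2 \<or> i = 5 then 1 else 2)"

lemma rp7_simps[simp]: "rp7 0 = 0" "rp7 1 = 0" "rp7 2 = 0" "rp7 3 = 1" "rp7 4 = 2" "rp7 5 = 2" "rp7 6 = 2"
  by (simp_all add: rp7_def)
lemma rz7_simps[simp]: "rz7 0 = 0" "rz7 1 = 1" "rz7 2 = 2" "rz7 3 = 2" "rz7 4 = 0" "rz7 5 = 1" "rz7 6 = 2"
  by (simp_all add: rz7_def)
lemma cx7_simps[simp]: "cx7 0 = 0" "cx7 1 = 0" "cx7 2 = 1" "cx7 3 = 1" "cx7 4 = 2" "cx7 5 = 2" "cx7 6 = 2"
  by (simp_all add: cx7_def)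
lemma cy7_simps[simp]: "cy7 0 = 0" "cy7 1 = 2" "cy7 2 = 1" "cy7 3 = 2" "cy7 4 = 0" "cy7 5 = 1" "cy7 6 = 2"
  by (simp_all add: cy7_def)

lemma tT_vals: "tT a b c = (if (a,b,c) \<in> {(1,3,0),(2,0,1),(3,2,1),(1,2,2),(2,1,3),(3,3,3)} then 1 else 0)"
  if "a < 4" "b < 4" "c < 4"
  using lt4[OF that(1)] lt4[OF that(2)] lt4[OF that(3)]
  by (elim disjE) (simp_all add: tT_def T_op_def tensor3_def S0_def S1_def S2_def S3_def ri_def ci_def)

definition uT :: "complex^7 \<Rightarrow> (nat \<Rightarrow> complex) \<Rightarrow> (nat \<Rightarrow> complex) \<Rightarrow> complex^7" where
  "uT y l m = (\<chi> c::7. if c = 0 then - y$1 else if c = 1 then - y$0 - m 1 * y$2 else if c = 2 then y$2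
     else if c = 3 then - y$6 else if c = 4 then y$5 else if c = 5 then y$3 + l 3 * y$1 - y$0 - m 1 * y$2
     else y$4 - m 3 * y$2 + m 2 * (y$3 + l 3 * y$1 - y$0 - m 1 * y$2))"

lemma uT_simps: "uT y l m $ 0 = - y$1" "uT y l m $ 1 = - y$0 - m 1 * y$2" "uT y l m $ 2 = y$2"
  "uT y l m $ 3 = - y$6" "uT y l m $ 4 = y$5" "uT y l m $ 5 = y$3 + l 3 * y$1 - y$0 - m 1 * y$2"
  "uT y l m $ 6 = y$4 - m 3 * y$2 + m 2 * (y$3 + l 3 * y$1 - y$0 - m 1 * y$2)"
  by (simp_all add: uT_def)

lemma surjT: "\<forall>v::complex^7. \<exists>u. v = kmat (tt2 tT l m) rp7 rz7 cx7 cy7 *v u"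
proof
  fix y :: "complex^7"
  have "y = kmat (tt2 tT l m) rp7 rz7 cx7 cy7 *v uT y l m"
    unfolding vec_eq_iff
  proof
    fix i :: 7
    show "y $ i = (kmat (tt2 tT l m) rp7 rz7 cx7 cy7 *v uT y l m) $ i"
      using exhaust_7[of i]
      by (elim disjE) (simp only: matrix_vector_mult_def vec_lambda_beta sum_UNIV7 kmat_def sum3
          rp7_simps rz7_simps cx7_simps cy7_simps uT_simps; simp add: ks_def tt2_def tT_vals eval_nat_numeral algebra_simps)+
  qed
  then show "\<exists>u. y = kmat (tt2 tT l m) rp7 rz7 cx7 cy7 *v u" by blast
qed


definition tU :: "nat \<Rightarrow> nat \<Rightarrow> nat \<Rightarrow> complex" where
  "tU a b c = U8 $ (ri a, ri b, ri c) $ (ci a, ci b, ci c)"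

lemma tU_vals: "tU a b c = (if (a,b,c) \<in> {(0,0,0),(1,3,0),(2,0,1),(3,2,1),(0,1,2),(1,2,2),(2,1,3),(3,3,3)} then 1 else 0)"
  if "a < 4" "b < 4" "c < 4"
  using lt4[OF that(1)] lt4[OF that(2)] lt4[OF that(3)]
  by (elim disjE) (simp_all add: tU_def U8_def tensor3_def S0_def S1_def S2_def S3_def ri_def ci_def)

definition tP :: "(nat \<Rightarrow> nat \<Rightarrow> nat \<Rightarrow> complex) \<Rightarrow> nat \<Rightarrow> nat \<Rightarrow> nat \<Rightarrow> complex" where
  "tP tt x y z = (if x = 0 then tt 3 y z else if x = 1 then tt 1 y z + tt 2 y z else tt 0 y z)"

lemma exhaust_12: fixes x :: 12 shows "x = 0 \<or> x = 1 \<or> x = 2 \<or> x = 3 \<or> x = 4 \<or> x = 5 \<or> x = 6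
  \<or> x = 7 \<or> x = 8 \<or> x = 9 \<or> x = 10 \<or> x = 11"
proof (induct x)
  case (of_int z)
  then have "z = 0 \<or> z = 1 \<or> z = 2 \<or> z = 3 \<or> z = 4 \<or> z = 5 \<or> z = 6 \<or> z = 7 \<or> z = 8
     \<or> z = 9 \<or> z = 10 \<or> z = 11" by simp presburger
  then show ?case by auto
qed

lemma UNIV12l: "(UNIV::12 set) = set [0,1,2,3,4,5,6,7,8,9,10,11]" using exhaust_12 by auto
lemma d12: "distinct [0,1,2,3,4,5,6,7,8,9,10,11::12]" by simp
lemma sum_UNIV12: "(\<Sum>j\<in>UNIV. f j) = f 0 + (f 1 + (f 2 + (f 3 + (f 4 + (f 5 + (f 6 + (f 7 + (f 8 + (f 9 + (f 10 + (f (11::12) :: 'a::comm_monoid_add)))))))))))"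
  unfolding UNIV12l sum.distinct_set_conv_list[OF d12] by simp

definition q12 :: "12 \<Rightarrow> nat" where "q12 i = (if i = 0 \<or> i = 1 \<or> i = 2 \<or> i = 3 then 0
   else if i = 4 \<or> i = 5 \<or> i = 6 \<or> i = 7 then 1 else 2)"
definition m12 :: "12 \<Rightarrow> nat" where "m12 i = (if i = 0 \<or> i = 4 \<or> i = 8 then 0
   else if i = 1 \<or> i = 5 \<or> i = 9 then 1 else if i = 2 \<or> i = 6 \<or> i = 10 then 2 else 3)"
lemma q12_simps[simp]: "q12 0 = 0" "q12 1 = 0" "q12 2 = 0" "q12 3 = 0" "q12 4 = 1" "q12 5 = 1" "q12 6 = 1" "q12 7 = 1" "q12 8 = 2" "q12 9 = 2" "q12 10 = 2" "q12 11 = 2"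
  by (simp_all add: q12_def)

lemma m12_simps[simp]: "m12 0 = 0" "m12 1 = 1" "m12 2 = 2" "m12 3 = 3" "m12 4 = 0" "m12 5 = 1" "m12 6 = 2" "m12 7 = 3" "m12 8 = 0" "m12 9 = 1" "m12 10 = 2" "m12 11 = 3"
  by (simp_all add: m12_def)

definition uU :: "complex^12 \<Rightarrow> complex^12" where
  "uU y = (\<chi> c::12. if c = 0 then - y$4 else if c = 1 then - y$6 else if c = 2 then - y$2 else if c = 3 then - y$0 else if c = 4 then y$7 - y$8 else if c = 5 then y$5 - y$10 else if c = 6 then y$1 - y$4 else if c = 7 then y$3 - y$6 else if c = 8 then y$9 else if c = 9 then y$11 else if c = 10 then y$5 else y$7)"

lemma uU_simps: "uU y $ 0 = - y$4" "uU y $ 1 = - y$6" "uU y $ 2 = - y$2" "uU y $ 3 = - y$0" "uU y $ 4 = y$7 - y$8" "uU y $ 5 = y$5 - y$10" "uU y $ 6 = y$1 - y$4" "uU y $ 7 = y$3 - y$6" "uU y $ 8 = y$9" "uU y $ 9 = y$11" "uU y $ 10 = y$5" "uU y $ 11 = y$7"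
  by (simp_all add: uU_def)

lemma surjU: "\<forall>v::complex^12. \<exists>u. v = kmat (tP tU) q12 m12 q12 m12 *v u"
proof
  fix y :: "complex^12"
  have "y = kmat (tP tU) q12 m12 q12 m12 *v uU y"
    unfolding vec_eq_iff
  proof
    fix i :: 12
    show "y $ i = (kmat (tP tU) q12 m12 q12 m12 *v uU y) $ i"
      using exhaust_12[of i]
      by (elim disjE) (simp only: matrix_vector_mult_def vec_lambda_beta sum_UNIV12 kmat_def sum3
          q12_simps m12_simps uU_simps; simp add: ks_def tP_def tU_vals algebra_simps)+
  qed
  then show "\<exists>u. y = kmat (tP tU) q12 m12 q12 m12 *v u" by blast
qed


lemma entry_dec:
  assumes "U = (\<Sum>j<r. tensor3 (A j) (B j) (C j))"
  shows "U $ (ri a, ri b, ri c) $ (ci a, ci b, ci c) = (\<Sum>j<r. ent a (A j) * ent b (B j) * ent c (C j))"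
  by (simp add: assms sum_component tensor3_def ent_def)

lemma T_lower:
  fixes A B C :: "nat \<Rightarrow> mat2" and r :: nat
  assumes dec: "T_op = (\<Sum>j<r. tensor3 (A j) (B j) (C j))"
  shows "6 \<le> r"
proof -
  define al where "al j a = ent a (A j)" for j a
  define be where "be j b = ent b (B j)" for j b
  define ga where "ga j c = ent c (C j)" for j c
  have H: "tT a b c = (\<Sum>j<r. al j a * be j b * ga j c)" for a b c
    using entry_dec[OF dec] by (simp add: tT_def al_def be_def ga_def)
  have "(\<Sum>j<r. al j 1 * be j 3 * ga j 0) = 1" using H[of 1 3 0] by (simp add: tT_vals)
  then have "(\<Sum>j<r. al j 1 * be j 3 * ga j 0) \<noteq> 0" by simp
  then obtain j0 where j0: "j0 < r" "al j0 1 * be j0 3 * ga j0 0 \<noteq> 0"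
    by (rule sum.not_neutral_contains_not_neutral) auto
  then have g0: "ga j0 0 \<noteq> 0" by auto
  define lam where "lam c = ga j0 c / ga j0 0" for c
  define ga' where "ga' j c = ga j c - ga j 0 * lam c" for j c
  have H1: "(\<Sum>j<r. al j a * be j b * ga' j c) = tT a b c - lam c * tT a b 0" for a b c
    by (simp add: H ga'_def sum_subtractf sum_distrib_left algebra_simps)
  have z0: "ga' j0 c = 0" for c using g0 by (simp add: ga'_def lam_def)
  have "(\<Sum>j<r. al j 2 * be j 0 * ga' j 1) = 1" using H1[of 2 0 1] by (simp add: tT_vals)
  then have "(\<Sum>j<r. al j 2 * be j 0 * ga' j 1) \<noteq> 0" by simp
  then obtain j1 where j1: "j1 < r" "al j1 2 * be j1 0 * ga' j1 1 \<noteq> 0"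
    by (rule sum.not_neutral_contains_not_neutral) auto
  then have b0: "be j1 0 \<noteq> 0" and j01: "j1 \<noteq> j0" using z0 by auto
  define mu where "mu b = be j1 b / be j1 0" for b
  define be' where "be' j b = be j b - be j 0 * mu b" for j b
  have z1: "be' j1 b = 0" for b using b0 by (simp add: be'_def mu_def)
  have H2: "(\<Sum>j<r. al j a * be' j b * ga' j c) = (tT a b c - lam c * tT a b 0) - mu b * (tT a 0 c - lam c * tT a 0 0)" for a b c
  proof -
    have "(\<Sum>j<r. al j a * be' j b * ga' j c) = (\<Sum>j<r. al j a * be j b * ga' j c) - mu b * (\<Sum>j<r. al j a * be j 0 * ga' j c)"
      by (simp add: be'_def sum_subtractf sum_distrib_left algebra_simps)
    then show ?thesis by (simp add: H1)
  qed
  define J where "J = {..<r} - {j0, j1}"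
  have finJ: "finite J" by (simp add: J_def)
  have cardJ: "card J = r - 2" using j0 j1 j01 by (simp add: J_def card_Diff_subset)
  have H3: "(\<Sum>j\<in>J. al j a * be' j b * ga' j c) = (\<Sum>j<r. al j a * be' j b * ga' j c)" for a b c
    by (rule sum.mono_neutral_left) (auto simp: J_def z0 z1)
  have H4: "(\<Sum>j\<in>J. be' j b * al j a * ga' j c) = (tT a b c - lam c * tT a b 0) - mu b * (tT a 0 c - lam c * tT a 0 0)" for a b c
  proof -
    have "(\<Sum>j\<in>J. be' j b * al j a * ga' j c) = (\<Sum>j\<in>J. al j a * be' j b * ga' j c)"
      by (simp add: mult_ac)
    then show ?thesis using H3 H2 by simp
  qed
  have decK: "\<forall>x<3. \<forall>y z. tt2 tT lam mu x y z = (\<Sum>j\<in>J. be' j (x+1) * al j (y+1) * ga' j (z+1))"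
    by (simp only: tt2_def H4) simp
  have "CARD(7) \<le> 2 * card J"
    by (rule koszul_bound[OF finJ decK surjT])
  then show ?thesis using cardJ by simp
qed

lemma U_lower:
  fixes A B C :: "nat \<Rightarrow> mat2" and r :: nat
  assumes dec: "U8 = (\<Sum>j<r. tensor3 (A j) (B j) (C j))"
  shows "6 \<le> r"
proof -
  define al where "al j a = ent a (A j)" for j a
  define be where "be j b = ent b (B j)" for j b
  define ga where "ga j c = ent c (C j)" for j c
  have H: "tU a b c = (\<Sum>j<r. al j a * be j b * ga j c)" for a b c
    using entry_dec[OF dec] by (simp add: tU_def al_def be_def ga_def)
  have decK: "\<forall>x<3. \<forall>y z. tP tU x y z = (\<Sum>j\<in>{..<r}. tP (\<lambda>a b c. al j a) x 0 0 * be j y * ga j z)"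
    by (simp add: tP_def H sum.distrib[symmetric] algebra_simps)
  have "CARD(12) \<le> 2 * card {..<r}"
    by (rule koszul_bound[OF _ decK surjU]) simp
  then show ?thesis by simp
qed

lemma T_upper: "T_op = (\<Sum>j<6. tensor3 ([S1,S2,S3,S1,S2,S3] ! j) ([S3,S0,S2,S2,S1,S3] ! j) ([S0,S1,S1,S2,S3,S3] ! j))"
  by (simp add: T_op_def numeral_eq_Suc lessThan_Suc add_ac)

lemma U_upper: "U8 = (\<Sum>j<8. tensor3 ([S0,S1,S2,S3,S0,S1,S2,S3] ! j) ([S0,S3,S0,S2,S1,S2,S1,S3] ! j) ([S0,S0,S1,S1,S2,S2,S3,S3] ! j))"
  by (simp add: U8_def numeral_eq_Suc lessThan_Suc add_ac)

theorem lemma4: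
  shows "schmidt_rank T_op = 6 \<and> schmidt_rank U8 \<ge> 6"
proof
  show "schmidt_rank T_op = 6"
    unfolding schmidt_rank_def
  proof (rule Least_equality)
    show "\<exists>A B C :: nat \<Rightarrow> mat2. T_op = (\<Sum>j<6. tensor3 (A j) (B j) (C j))"
      using T_upper by blast
  next
    fix y assume "\<exists>A B C :: nat \<Rightarrow> mat2. T_op = (\<Sum>j<y. tensor3 (A j) (B j) (C j))"
    then show "6 \<le> y" using T_lower by blast
  qed
next
  have ex: "\<exists>r. \<exists>A B C :: nat \<Rightarrow> mat2. U8 = (\<Sum>j<r. tensor3 (A j) (B j) (C j))"
    using U_upper by blast
  have "\<exists>A B C :: nat \<Rightarrow> mat2. U8 = (\<Sum>j<schmidt_rank U8. tensor3 (A j) (B j) (C j))"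
    unfolding schmidt_rank_def by (rule LeastI_ex[OF ex])
  then show "schmidt_rank U8 \<ge> 6" using U_lower by blast
qed

end
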